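(* Let $\mathsf{G}$ be a strict monoidal category, let $\mathsf{X}$ be a small category, let $T:\mathsf{G}\to\mathsf{End}(\mathsf{X})$ be a strict monoidal functor, and let $\mathrm{W}$ be a monoidal weight on $\mathsf{G}$. Then the $\mathsf{G}$-interleaving distance $d_{T,\mathrm{W}}$ is an extended pseudometric on the object set $\mathsf{X}_0$; that is, $d_{T,\mathrm{W}}(X,X)=0$, $d_{T,\mathrm{W}}(X,Y)=d_{T,\mathrm{W}}(Y,X)$ and $d_{T,\mathrm{W}}(X,Z)\le d_{T,\mathrm{W}}(X,Y)+d_{T,\mathrm{W}}(Y,Z)$ for all $X,Y,Z\in\mathsf{X}_0$.
   Context: $\mathsf{G}$ is a strict monoidal category with tensor product written as juxtaposition $gh=g\otimes h$ on objects and unit object $e$. $\mathsf{End}(\mathsf{X})$ is the strict monoidal category whose objects are functors $\mathsf{X}\to\mathsf{X}$, whose morphisms are natural transformations, with tensor product given by composition of functors and horizontal composition $\bullet$ of natural transformations, and unit the identity functor $1_{\mathsf{X}}$. A strict monoidal functor $T$ satisfies $T(e)=1_{\mathsf X}$, $T_{gh}=T_gT_h$ (writing $T_g=T(g)$), and $T(\beta\otimes\alpha)=T(\beta)\bullet T(\alpha)$. A monoidal weight on $\mathsf{G}$ is a function $\mathrm{W}:\mathsf{G}_0\to\mathbb{R}\cup\{\infty\}$ with $\mathrm{W}(g)\ge 0$ for all $g$, $\mathrm{W}(e)=0$, and $\mathrm{W}(gf)\le \mathrm{W}(g)+\mathrm{W}(f)$ for all objects $f,g$. For $X,Y\in\mathsf{X}_0$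 and $g,h\in\mathsf{G}_0$, $X$ and $Y$ are $(g,h)$-interleaved if there exist morphisms $\phi:X\to T_g(Y)$ and $\psi:Y\to T_h(X)$ in $\mathsf{X}$ and morphisms $\alpha:e\to gh$, $\beta:e\to hg$ in $\mathsf{G}$ such that $T_g(\psi)\circ\phi=T(\alpha)_X$ and $T_h(\phi)\circ\psi=T(\beta)_Y$. The $\mathsf{G}$-interleaving distance is $d_{T,\mathrm{W}}(X,Y)=\inf\{\max\{\mathrm{W}(g),\mathrm{W}(h)\}: X,Y \text{ are } (g,h)\text{-interleaved}\}$, with $\inf\emptyset=\infty$. An extended pseudometric is a function to $[0,\infty]$ satisfying the three listed properties. *)

theory Defs
  imports Main "HOL-Library.Extended_Real"
begin

record ('o, 'a) cat =
  cat_obj :: "'o set"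
  cat_arr :: "'a set"
  cat_dom :: "'a \<Rightarrow> 'o"
  cat_cod :: "'a \<Rightarrow> 'o"
  cat_comp :: "'a \<Rightarrow> 'a \<Rightarrow> 'a"   (* cat_comp C g f = g \<circ> f *)
  cat_id :: "'o \<Rightarrow> 'a"

definition hom :: "('o, 'a, 'z) cat_scheme \<Rightarrow> 'o \<Rightarrow> 'o \<Rightarrow> 'a set" where
  "hom C x y = {f \<in> cat_arr C. cat_dom C f = x \<and> cat_cod C f = y}"

definition is_category :: "('o, 'a, 'z) cat_scheme \<Rightarrow> bool" where
  "is_category C \<longleftrightarrow>
     (\<forall>f \<in> cat_arr C. cat_dom C f \<in> cat_obj C \<and> cat_cod C f \<in> cat_obj C) \<and>
     (\<forall>x \<in> cat_obj C. cat_id C x \<in> hom C x x) \<and>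
     (\<forall>f \<in> cat_arr C. \<forall>g \<in> cat_arr C. cat_cod C f = cat_dom C g \<longrightarrow>
        cat_comp C g f \<in> hom C (cat_dom C f) (cat_cod C g)) \<and>
     (\<forall>f \<in> cat_arr C. cat_comp C (cat_id C (cat_cod C f)) f = f \<and>
                       cat_comp C f (cat_id C (cat_dom C f)) = f) \<and>
     (\<forall>f \<in> cat_arr C. \<forall>g \<in> cat_arr C. \<forall>h \<in> cat_arr C.
        cat_cod C f = cat_dom C g \<longrightarrow> cat_cod C g = cat_dom C h \<longrightarrow>
        cat_comp C h (cat_comp C g f) = cat_comp C (cat_comp C h g) f)"

record ('o, 'a) moncat = "('o, 'a) cat" +
  tens_obj :: "'o \<Rightarrow> 'o \<Rightarrow> 'o"
  tens_arr :: "'a \<Rightarrow> 'a \<Rightarrow> 'a"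
  munit :: "'o"

definition is_strict_monoidal_category :: "('o, 'a, 'z) moncat_scheme \<Rightarrow> bool" where
  "is_strict_monoidal_category G \<longleftrightarrow>
     is_category G \<and>
     munit G \<in> cat_obj G \<and>
     (\<forall>a \<in> cat_obj G. \<forall>b \<in> cat_obj G. tens_obj G a b \<in> cat_obj G) \<and>
     (\<forall>f \<in> cat_arr G. \<forall>g \<in> cat_arr G.
        tens_arr G f g \<in> hom G (tens_obj G (cat_dom G f) (cat_dom G g))
                               (tens_obj G (cat_cod G f) (cat_cod G g))) \<and>
     (\<forall>a \<in> cat_obj G. \<forall>b \<in> cat_obj G.
        tens_arr G (cat_id G a) (cat_id G b) = cat_id G (tens_obj G a b)) \<and>
     (\<forall>f \<in> cat_arr G. \<forall>f' \<in> cat_arr G. \<forall>g \<in> cat_arr G. \<forall>g' \<in> cat_arr G.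
        cat_cod G f = cat_dom G f' \<longrightarrow> cat_cod G g = cat_dom G g' \<longrightarrow>
        tens_arr G (cat_comp G f' f) (cat_comp G g' g)
          = cat_comp G (tens_arr G f' g') (tens_arr G f g)) \<and>
     (\<forall>a \<in> cat_obj G. \<forall>b \<in> cat_obj G. \<forall>c \<in> cat_obj G.
        tens_obj G (tens_obj G a b) c = tens_obj G a (tens_obj G b c)) \<and>
     (\<forall>f \<in> cat_arr G. \<forall>g \<in> cat_arr G. \<forall>h \<in> cat_arr G.
        tens_arr G (tens_arr G f g) h = tens_arr G f (tens_arr G g h)) \<and>
     (\<forall>a \<in> cat_obj G. tens_obj G (munit G) a = a \<and> tens_obj G a (munit G) = a) \<and>
     (\<forall>f \<in> cat_arr G. tens_arr G (cat_id G (munit G)) f = f \<and>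
                       tens_arr G f (cat_id G (munit G)) = f)"

text \<open>An endofunctor of X is given by its object map Fo and arrow map Fa
  (only their values on objects / arrows of X matter).\<close>

definition is_endofunctor ::
  "('xo, 'xa, 'z) cat_scheme \<Rightarrow> ('xo \<Rightarrow> 'xo) \<Rightarrow> ('xa \<Rightarrow> 'xa) \<Rightarrow> bool" where
  "is_endofunctor X Fo Fa \<longleftrightarrow>
     (\<forall>x \<in> cat_obj X. Fo x \<in> cat_obj X) \<and>
     (\<forall>f \<in> cat_arr X. Fa f \<in> hom X (Fo (cat_dom X f)) (Fo (cat_cod X f))) \<and>
     (\<forall>x \<in> cat_obj X. Fa (cat_id X x) = cat_id X (Fo x)) \<and>
     (\<forall>f \<in> cat_arr X. \<forall>g \<in> cat_arr X. cat_cod X f = cat_dom X g \<longrightarrow>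
        Fa (cat_comp X g f) = cat_comp X (Fa g) (Fa f))"

text \<open>A strict monoidal functor T : G \<rightarrow> End(X) is given by
  Tfo g / Tfa g : the object / arrow maps of the endofunctor T_g (g an object of G), and
  Tnat \<alpha> x   : the component at x of the natural transformation T(\<alpha>) (\<alpha> an arrow of G).
  Functors and natural transformations in End(X) are compared on the objects/arrows of X.
  Tensor in End(X): composition of functors, and horizontal composition
  (\<beta> \<bullet> \<alpha>)_x = T_{g'}(\<alpha>_x) \<circ> \<beta>_{T_h x} for \<beta> : g \<rightarrow> g', \<alpha> : h \<rightarrow> h'.\<close>

definition is_strict_monoidal_functor ::
  "('go, 'ga, 'z1) moncat_scheme \<Rightarrow> ('xo, 'xa, 'z2) cat_scheme \<Rightarrow>
   ('go \<Rightarrow> 'xo \<Rightarrow> 'xo) \<Rightarrow> ('go \<Rightarrow> 'xa \<Rightarrow> 'xa) \<Rightarrow> ('ga \<Rightarrow> 'xo \<Rightarrow> 'xa) \<Rightarrow> bool" where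
  "is_strict_monoidal_functor G X Tfo Tfa Tnat \<longleftrightarrow>
     \<comment> \<open>objects go to endofunctors\<close>
     (\<forall>g \<in> cat_obj G. is_endofunctor X (Tfo g) (Tfa g)) \<and>
     \<comment> \<open>arrows go to natural transformations T_{dom \<alpha>} \<Rightarrow> T_{cod \<alpha>}\<close>
     (\<forall>\<alpha> \<in> cat_arr G. \<forall>x \<in> cat_obj X.
        Tnat \<alpha> x \<in> hom X (Tfo (cat_dom G \<alpha>) x) (Tfo (cat_cod G \<alpha>) x)) \<and>
     (\<forall>\<alpha> \<in> cat_arr G. \<forall>f \<in> cat_arr X.
        cat_comp X (Tfa (cat_cod G \<alpha>) f) (Tnat \<alpha> (cat_dom X f))
          = cat_comp X (Tnat \<alpha> (cat_cod X f)) (Tfa (cat_dom G \<alpha>) f)) \<and>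
     \<comment> \<open>functoriality\<close>
     (\<forall>g \<in> cat_obj G. \<forall>x \<in> cat_obj X. Tnat (cat_id G g) x = cat_id X (Tfo g x)) \<and>
     (\<forall>\<alpha> \<in> cat_arr G. \<forall>\<beta> \<in> cat_arr G. cat_cod G \<alpha> = cat_dom G \<beta> \<longrightarrow>
        (\<forall>x \<in> cat_obj X. Tnat (cat_comp G \<beta> \<alpha>) x = cat_comp X (Tnat \<beta> x) (Tnat \<alpha> x))) \<and>
     \<comment> \<open>T(e) = 1_X\<close>
     (\<forall>x \<in> cat_obj X. Tfo (munit G) x = x) \<and>
     (\<forall>f \<in> cat_arr X. Tfa (munit G) f = f) \<and>
     \<comment> \<open>T_{gh} = T_g T_h\<close>
     (\<forall>g \<in> cat_obj G. \<forall>h \<in> cat_obj G.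
        (\<forall>x \<in> cat_obj X. Tfo (tens_obj G g h) x = Tfo g (Tfo h x)) \<and>
        (\<forall>f \<in> cat_arr X. Tfa (tens_obj G g h) f = Tfa g (Tfa h f))) \<and>
     \<comment> \<open>T(\<beta> \<otimes> \<alpha>) = T(\<beta>) \<bullet> T(\<alpha>)\<close>
     (\<forall>\<beta> \<in> cat_arr G. \<forall>\<alpha> \<in> cat_arr G. \<forall>x \<in> cat_obj X.
        Tnat (tens_arr G \<beta> \<alpha>) x
          = cat_comp X (Tfa (cat_cod G \<beta>) (Tnat \<alpha> x)) (Tnat \<beta> (Tfo (cat_dom G \<alpha>) x)))"

definition is_monoidal_weight :: "('go, 'ga, 'z) moncat_scheme \<Rightarrow> ('go \<Rightarrow> ereal) \<Rightarrow> bool" where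
  "is_monoidal_weight G W \<longleftrightarrow>
     (\<forall>g \<in> cat_obj G. W g \<ge> 0 \<and> W g \<noteq> -\<infinity>) \<and>
     W (munit G) = 0 \<and>
     (\<forall>f \<in> cat_obj G. \<forall>g \<in> cat_obj G. W (tens_obj G g f) \<le> W g + W f)"

definition interleaved ::
  "('go, 'ga, 'z1) moncat_scheme \<Rightarrow> ('xo, 'xa, 'z2) cat_scheme \<Rightarrow>
   ('go \<Rightarrow> 'xo \<Rightarrow> 'xo) \<Rightarrow> ('go \<Rightarrow> 'xa \<Rightarrow> 'xa) \<Rightarrow> ('ga \<Rightarrow> 'xo \<Rightarrow> 'xa) \<Rightarrow>
   'xo \<Rightarrow> 'xo \<Rightarrow> 'go \<Rightarrow> 'go \<Rightarrow> bool" where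
  "interleaved G X Tfo Tfa Tnat x y g h \<longleftrightarrow>
     (\<exists>\<phi> \<psi> \<alpha> \<beta>.
        \<phi> \<in> hom X x (Tfo g y) \<and> \<psi> \<in> hom X y (Tfo h x) \<and>
        \<alpha> \<in> hom G (munit G) (tens_obj G g h) \<and> \<beta> \<in> hom G (munit G) (tens_obj G h g) \<and>
        cat_comp X (Tfa g \<psi>) \<phi> = Tnat \<alpha> x \<and>
        cat_comp X (Tfa h \<phi>) \<psi> = Tnat \<beta> y)"

definition interleaving_distance ::
  "('go, 'ga, 'z1) moncat_scheme \<Rightarrow> ('xo, 'xa, 'z2) cat_scheme \<Rightarrow>
   ('go \<Rightarrow> 'xo \<Rightarrow> 'xo) \<Rightarrow> ('go \<Rightarrow> 'xa \<Rightarrow> 'xa) \<Rightarrow> ('ga \<Rightarrow> 'xo \<Rightarrow> 'xa) \<Rightarrow>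
   ('go \<Rightarrow> ereal) \<Rightarrow> 'xo \<Rightarrow> 'xo \<Rightarrow> ereal" where
  "interleaving_distance G X Tfo Tfa Tnat W x y =
     Inf {max (W g) (W h) | g h. g \<in> cat_obj G \<and> h \<in> cat_obj G \<and>
                                 interleaved G X Tfo Tfa Tnat x y g h}"

end

theory Submission imports Defs begin
locale setting =
  fixes G :: "('go, 'ga) moncat" and X :: "('xo, 'xa) cat"
    and Tfo :: "'go \<Rightarrow> 'xo \<Rightarrow> 'xo" and Tfa :: "'go \<Rightarrow> 'xa \<Rightarrow> 'xa"
    and Tnat :: "'ga \<Rightarrow> 'xo \<Rightarrow> 'xa"
  assumes G: "is_strict_monoidal_category G"
    and X: "is_category X"
    and T: "is_strict_monoidal_functor G X Tfo Tfa Tnat"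
begin

abbreviation "cX \<equiv> cat_comp X"
abbreviation "cG \<equiv> cat_comp G"
abbreviation "e \<equiv> munit G"
abbreviation "to \<equiv> tens_obj G"
abbreviation "ta \<equiv> tens_arr G"

lemma X_comp: "f \<in> hom X a b \<Longrightarrow> g \<in> hom X b c \<Longrightarrow> cX g f \<in> hom X a c"
  using X unfolding is_category_def hom_def by auto
lemma X_id: "a \<in> cat_obj X \<Longrightarrow> cat_id X a \<in> hom X a a"
  using X unfolding is_category_def by auto
lemma X_idl: "f \<in> hom X a b \<Longrightarrow> cX (cat_id X b) f = f"
  using X unfolding is_category_def hom_def by auto
lemma X_idr: "f \<in> hom X a b \<Longrightarrow> cX f (cat_id X a) = f"
  using X unfolding is_category_def hom_def by auto
lemma X_assoc: "f \<in> hom X a b \<Longrightarrow> g \<in> hom X b c \<Longrightarrow> h \<in> hom X c d \<Longrightarrow>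
   cX h (cX g f) = cX (cX h g) f"
  using X unfolding is_category_def hom_def by auto
lemma X_obj: "f \<in> hom X a b \<Longrightarrow> a \<in> cat_obj X \<and> b \<in> cat_obj X"
  using X unfolding is_category_def hom_def by auto

lemma G_cat: "is_category G" using G unfolding is_strict_monoidal_category_def by auto
lemma G_comp: "f \<in> hom G a b \<Longrightarrow> g \<in> hom G b c \<Longrightarrow> cG g f \<in> hom G a c"
  using G_cat unfolding is_category_def hom_def by auto
lemma G_id: "a \<in> cat_obj G \<Longrightarrow> cat_id G a \<in> hom G a a"
  using G_cat unfolding is_category_def by auto
lemma G_obj: "f \<in> hom G a b \<Longrightarrow> a \<in> cat_obj G \<and> b \<in> cat_obj G"
  using G_cat unfolding is_category_def hom_def by auto
lemma G_e: "e \<in> cat_obj G" using G unfolding is_strict_monoidal_category_def by auto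
lemma G_to: "a \<in> cat_obj G \<Longrightarrow> b \<in> cat_obj G \<Longrightarrow> to a b \<in> cat_obj G"
  using G unfolding is_strict_monoidal_category_def by auto
lemma G_ta: "f \<in> hom G a b \<Longrightarrow> g \<in> hom G c d \<Longrightarrow> ta f g \<in> hom G (to a c) (to b d)"
  using G unfolding is_strict_monoidal_category_def hom_def by auto
lemma G_assoc: "a \<in> cat_obj G \<Longrightarrow> b \<in> cat_obj G \<Longrightarrow> c \<in> cat_obj G \<Longrightarrow>
   to (to a b) c = to a (to b c)"
  using G unfolding is_strict_monoidal_category_def by auto
lemma G_unit: "a \<in> cat_obj G \<Longrightarrow> to e a = a \<and> to a e = a"
  using G unfolding is_strict_monoidal_category_def by auto

lemma T_endo: "g \<in> cat_obj G \<Longrightarrow> is_endofunctor X (Tfo g) (Tfa g)"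
  using T unfolding is_strict_monoidal_functor_def by auto
lemma T_hom: "g \<in> cat_obj G \<Longrightarrow> f \<in> hom X a b \<Longrightarrow> Tfa g f \<in> hom X (Tfo g a) (Tfo g b)"
  using T_endo unfolding is_endofunctor_def hom_def by auto
lemma T_fid: "g \<in> cat_obj G \<Longrightarrow> a \<in> cat_obj X \<Longrightarrow> Tfa g (cat_id X a) = cat_id X (Tfo g a)"
  using T_endo unfolding is_endofunctor_def by auto
lemma T_fcomp: "g \<in> cat_obj G \<Longrightarrow> f \<in> hom X a b \<Longrightarrow> k \<in> hom X b c \<Longrightarrow>
   Tfa g (cX k f) = cX (Tfa g k) (Tfa g f)"
  using T_endo unfolding is_endofunctor_def hom_def by auto
lemma T_nat_hom: "\<alpha> \<in> hom G a b \<Longrightarrow> x \<in> cat_obj X \<Longrightarrow> Tnat \<alpha> x \<in> hom X (Tfo a x) (Tfo b x)"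
  using T unfolding is_strict_monoidal_functor_def hom_def by auto
lemma T_natural: "\<alpha> \<in> hom G a b \<Longrightarrow> f \<in> hom X x y \<Longrightarrow>
   cX (Tfa b f) (Tnat \<alpha> x) = cX (Tnat \<alpha> y) (Tfa a f)"
  using T unfolding is_strict_monoidal_functor_def hom_def by auto
lemma T_nat_id: "g \<in> cat_obj G \<Longrightarrow> x \<in> cat_obj X \<Longrightarrow> Tnat (cat_id G g) x = cat_id X (Tfo g x)"
  using T unfolding is_strict_monoidal_functor_def by auto
lemma T_nat_comp: "\<alpha> \<in> hom G a b \<Longrightarrow> \<beta> \<in> hom G b c \<Longrightarrow> x \<in> cat_obj X \<Longrightarrow>
   Tnat (cG \<beta> \<alpha>) x = cX (Tnat \<beta> x) (Tnat \<alpha> x)"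
  using T unfolding is_strict_monoidal_functor_def hom_def by auto
lemma T_e_o: "x \<in> cat_obj X \<Longrightarrow> Tfo e x = x"
  using T unfolding is_strict_monoidal_functor_def by auto
lemma T_e_a: "f \<in> hom X a b \<Longrightarrow> Tfa e f = f"
  using T unfolding is_strict_monoidal_functor_def hom_def by auto
lemma T_to_o: "g \<in> cat_obj G \<Longrightarrow> h \<in> cat_obj G \<Longrightarrow> x \<in> cat_obj X \<Longrightarrow> Tfo (to g h) x = Tfo g (Tfo h x)"
  using T unfolding is_strict_monoidal_functor_def by auto
lemma T_to_a: "g \<in> cat_obj G \<Longrightarrow> h \<in> cat_obj G \<Longrightarrow> f \<in> hom X a b \<Longrightarrow> Tfa (to g h) f = Tfa g (Tfa h f)"
  using T unfolding is_strict_monoidal_functor_def hom_def by auto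
lemma T_ta: "\<beta> \<in> hom G a b \<Longrightarrow> \<alpha> \<in> hom G c d \<Longrightarrow> x \<in> cat_obj X \<Longrightarrow>
   Tnat (ta \<beta> \<alpha>) x = cX (Tfa b (Tnat \<alpha> x)) (Tnat \<beta> (Tfo c x))"
  using T unfolding is_strict_monoidal_functor_def hom_def by auto

lemma compose:
  assumes x: "x \<in> cat_obj X" and y: "y \<in> cat_obj X" and z: "z \<in> cat_obj X"
    and g: "g \<in> cat_obj G" and h: "h \<in> cat_obj G" and g': "g' \<in> cat_obj G" and h': "h' \<in> cat_obj G"
    and \<phi>: "\<phi> \<in> hom X x (Tfo g y)" and \<psi>: "\<psi> \<in> hom X y (Tfo h x)"
    and \<alpha>: "\<alpha> \<in> hom G e (to g h)" and eq: "cX (Tfa g \<psi>) \<phi> = Tnat \<alpha> x"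
    and \<phi>': "\<phi>' \<in> hom X y (Tfo g' z)" and \<psi>': "\<psi>' \<in> hom X z (Tfo h' y)"
    and \<alpha>': "\<alpha>' \<in> hom G e (to g' h')" and eq': "cX (Tfa g' \<psi>') \<phi>' = Tnat \<alpha>' y"
  shows "cX (Tfa g \<phi>') \<phi> \<in> hom X x (Tfo (to g g') z)"
    and "cG (ta (cat_id G g) (ta \<alpha>' (cat_id G h))) \<alpha> \<in> hom G e (to (to g g') (to h' h))"
    and "cX (Tfa (to g g') (cX (Tfa h' \<psi>) \<psi>')) (cX (Tfa g \<phi>') \<phi>)
         = Tnat (cG (ta (cat_id G g) (ta \<alpha>' (cat_id G h))) \<alpha>) x"
proof -
  have hx: "Tfo h x \<in> cat_obj X" using X_obj[OF \<psi>] by simp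
  have gz: "Tfo g' z \<in> cat_obj X" using X_obj[OF \<phi>'] by simp
  have Tg\<phi>': "Tfa g \<phi>' \<in> hom X (Tfo g y) (Tfo g (Tfo g' z))" using T_hom[OF g \<phi>'] .
  show 1: "cX (Tfa g \<phi>') \<phi> \<in> hom X x (Tfo (to g g') z)"
    using X_comp[OF \<phi> Tg\<phi>'] T_to_o[OF g g' z] by simp
  have gh': "to g' h' \<in> cat_obj G" using G_to[OF g' h'] .
  have \<gamma>: "ta \<alpha>' (cat_id G h) \<in> hom G h (to (to g' h') h)"
    using G_ta[OF \<alpha>' G_id[OF h]] G_unit[OF h] by simp
  have A1: "ta (cat_id G g) (ta \<alpha>' (cat_id G h)) \<in> hom G (to g h) (to g (to (to g' h') h))"
    using G_ta[OF G_id[OF g] \<gamma>] .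
  have "to (to g g') (to h' h) = to g (to (to g' h') h)"
    using G_assoc g g' h h' G_to by simp
  then show "cG (ta (cat_id G g) (ta \<alpha>' (cat_id G h))) \<alpha> \<in> hom G e (to (to g g') (to h' h))"
    using G_comp[OF \<alpha> A1] by simp
  have T\<psi>: "Tfa h' \<psi> \<in> hom X (Tfo h' y) (Tfo h' (Tfo h x))" using T_hom[OF h' \<psi>] .
  have Tna'y: "Tnat \<alpha>' y \<in> hom X y (Tfo (to g' h') y)"
    using T_nat_hom[OF \<alpha>' y] T_e_o[OF y] by simp
  have Tna'hx: "Tnat \<alpha>' (Tfo h x) \<in> hom X (Tfo h x) (Tfo (to g' h') (Tfo h x))"
    using T_nat_hom[OF \<alpha>' hx] T_e_o[OF hx] by simp
  have g'\<psi>': "Tfa g' \<psi>' \<in> hom X (Tfo g' z) (Tfo g' (Tfo h' y))" using T_hom[OF g' \<psi>'] .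
  have g'h'\<psi>: "Tfa g' (Tfa h' \<psi>) \<in> hom X (Tfo g' (Tfo h' y)) (Tfo g' (Tfo h' (Tfo h x)))"
    using T_hom[OF g' T\<psi>] .
  have nat': "cX (Tfa g' (Tfa h' \<psi>)) (Tnat \<alpha>' y) = cX (Tnat \<alpha>' (Tfo h x)) \<psi>"
    using T_natural[OF \<alpha>' \<psi>] T_to_a[OF g' h' \<psi>] T_e_a[OF \<psi>] by simp
  have "Tfa (to g g') (cX (Tfa h' \<psi>) \<psi>') = Tfa g (Tfa g' (cX (Tfa h' \<psi>) \<psi>'))"
    using T_to_a[OF g g' X_comp[OF \<psi>' T\<psi>]] .
  also have "\<dots> = Tfa g (cX (Tfa g' (Tfa h' \<psi>)) (Tfa g' \<psi>'))"
    using T_fcomp[OF g' \<psi>' T\<psi>] by simp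
  finally have L1: "Tfa (to g g') (cX (Tfa h' \<psi>) \<psi>') = Tfa g (cX (Tfa g' (Tfa h' \<psi>)) (Tfa g' \<psi>'))" .
  have "cX (Tfa g (cX (Tfa g' (Tfa h' \<psi>)) (Tfa g' \<psi>'))) (cX (Tfa g \<phi>') \<phi>)
      = cX (cX (Tfa g (cX (Tfa g' (Tfa h' \<psi>)) (Tfa g' \<psi>'))) (Tfa g \<phi>')) \<phi>"
    using X_assoc[OF \<phi> Tg\<phi>' T_hom[OF g X_comp[OF g'\<psi>' g'h'\<psi>]]] .
  also have "cX (Tfa g (cX (Tfa g' (Tfa h' \<psi>)) (Tfa g' \<psi>'))) (Tfa g \<phi>')
      = Tfa g (cX (cX (Tfa g' (Tfa h' \<psi>)) (Tfa g' \<psi>')) \<phi>')"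
    using T_fcomp[OF g \<phi>' X_comp[OF g'\<psi>' g'h'\<psi>]] by simp
  also have "cX (cX (Tfa g' (Tfa h' \<psi>)) (Tfa g' \<psi>')) \<phi>' = cX (Tfa g' (Tfa h' \<psi>)) (Tnat \<alpha>' y)"
    using X_assoc[OF \<phi>' g'\<psi>' g'h'\<psi>] eq' by simp
  also have "\<dots> = cX (Tnat \<alpha>' (Tfo h x)) \<psi>" using nat' .
  also have "Tfa g (cX (Tnat \<alpha>' (Tfo h x)) \<psi>) = cX (Tfa g (Tnat \<alpha>' (Tfo h x))) (Tfa g \<psi>)"
    using T_fcomp[OF g \<psi> Tna'hx] .
  also have "cX (cX (Tfa g (Tnat \<alpha>' (Tfo h x))) (Tfa g \<psi>)) \<phi>
      = cX (Tfa g (Tnat \<alpha>' (Tfo h x))) (Tnat \<alpha> x)"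
    using X_assoc[OF \<phi> T_hom[OF g \<psi>] T_hom[OF g Tna'hx]] eq by simp
  finally have LHS: "cX (Tfa (to g g') (cX (Tfa h' \<psi>) \<psi>')) (cX (Tfa g \<phi>') \<phi>)
      = cX (Tfa g (Tnat \<alpha>' (Tfo h x))) (Tnat \<alpha> x)" using L1 by simp
  have "Tnat (ta \<alpha>' (cat_id G h)) x
      = cX (Tfa (to g' h') (Tnat (cat_id G h) x)) (Tnat \<alpha>' (Tfo h x))"
    using T_ta[OF \<alpha>' G_id[OF h] x] .
  also have "\<dots> = Tnat \<alpha>' (Tfo h x)"
    using T_nat_id[OF h x] T_fid[OF gh' hx] X_idl[OF Tna'hx] by simp
  finally have R1: "Tnat (ta \<alpha>' (cat_id G h)) x = Tnat \<alpha>' (Tfo h x)" .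
  have "Tnat (ta (cat_id G g) (ta \<alpha>' (cat_id G h))) x
      = cX (Tfa g (Tnat (ta \<alpha>' (cat_id G h)) x)) (Tnat (cat_id G g) (Tfo h x))"
    using T_ta[OF G_id[OF g] \<gamma> x] .
  also have "\<dots> = Tfa g (Tnat \<alpha>' (Tfo h x))"
    using R1 T_nat_id[OF g hx] X_idr[OF T_hom[OF g Tna'hx]] by simp
  finally have R2: "Tnat (ta (cat_id G g) (ta \<alpha>' (cat_id G h))) x = Tfa g (Tnat \<alpha>' (Tfo h x))" .
  show "cX (Tfa (to g g') (cX (Tfa h' \<psi>) \<psi>')) (cX (Tfa g \<phi>') \<phi>)
         = Tnat (cG (ta (cat_id G g) (ta \<alpha>' (cat_id G h))) \<alpha>) x"
    using LHS R2 T_nat_comp[OF \<alpha> A1 x] by simp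
qed

lemma il_refl: "x \<in> cat_obj X \<Longrightarrow> interleaved G X Tfo Tfa Tnat x x e e"
  unfolding interleaved_def
  apply (rule exI[of _ "cat_id X x"], rule exI[of _ "cat_id X x"],
         rule exI[of _ "cat_id G e"], rule exI[of _ "cat_id G e"])
  using X_id[of x] T_e_o[of x] G_id[OF G_e] G_unit[OF G_e] T_e_a[OF X_id[of x]] X_idl[OF X_id[of x]]
    T_nat_id[OF G_e, of x] by simp

lemma il_sym: "interleaved G X Tfo Tfa Tnat x y g h \<Longrightarrow> interleaved G X Tfo Tfa Tnat y x h g"
  unfolding interleaved_def by blast

lemma il_trans:
  assumes x: "x \<in> cat_obj X" and y: "y \<in> cat_obj X" and z: "z \<in> cat_obj X"
    and g: "g \<in> cat_obj G" and h: "h \<in> cat_obj G" and g': "g' \<in> cat_obj G" and h': "h' \<in> cat_obj G"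
    and i1: "interleaved G X Tfo Tfa Tnat x y g h" and i2: "interleaved G X Tfo Tfa Tnat y z g' h'"
  shows "interleaved G X Tfo Tfa Tnat x z (to g g') (to h' h)"
proof -
  obtain \<phi> \<psi> \<alpha> \<beta> where a: "\<phi> \<in> hom X x (Tfo g y)" "\<psi> \<in> hom X y (Tfo h x)"
     "\<alpha> \<in> hom G e (to g h)" "\<beta> \<in> hom G e (to h g)"
     "cX (Tfa g \<psi>) \<phi> = Tnat \<alpha> x" "cX (Tfa h \<phi>) \<psi> = Tnat \<beta> y"
    using i1 unfolding interleaved_def by blast
  obtain \<phi>' \<psi>' \<alpha>' \<beta>' where b: "\<phi>' \<in> hom X y (Tfo g' z)" "\<psi>' \<in> hom X z (Tfo h' y)"
     "\<alpha>' \<in> hom G e (to g' h')" "\<beta>' \<in> hom G e (to h' g')"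
     "cX (Tfa g' \<psi>') \<phi>' = Tnat \<alpha>' y" "cX (Tfa h' \<phi>') \<psi>' = Tnat \<beta>' z"
    using i2 unfolding interleaved_def by blast
  note c1 = compose[OF x y z g h g' h' a(1,2,3,5) b(1,2,3,5)]
  note c2 = compose[OF z y x h' g' h g b(2,1,4,6) a(2,1,4,6)]
  show ?thesis unfolding interleaved_def
    using c1 c2 by blast
qed

end
lemma ereal_Inf_tri:
  fixes A B :: "ereal set" and c :: ereal
  assumes A0: "\<And>a. a \<in> A \<Longrightarrow> 0 \<le> a" and B0: "\<And>b. b \<in> B \<Longrightarrow> 0 \<le> b"
    and le: "\<And>a b. a \<in> A \<Longrightarrow> b \<in> B \<Longrightarrow> c \<le> a + b"
  shows "c \<le> Inf A + Inf B"
proof (cases "A = {} \<or> B = {}")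
  case True
  have "0 \<le> Inf A" "0 \<le> Inf B" using A0 B0 by (auto intro: Inf_greatest)
  then show ?thesis using True by (auto simp: top_ereal_def)
next
  case False
  have IB: "0 \<le> Inf B" using B0 by (auto intro: Inf_greatest)
  have "Inf A + Inf B = (INF a\<in>A. a + Inf B)"
    using INF_ereal_add_left[of A "Inf B" "\<lambda>a. a"] False IB A0 by auto
  also have "\<dots> = (INF a\<in>A. (INF b\<in>B. a + b))"
  proof (rule INF_cong[OF refl])
    fix a assume "a \<in> A"
    then show "a + Inf B = (INF b\<in>B. a + b)"
      using INF_ereal_add_right[of B a "\<lambda>b. b"] False B0 A0[of a] by auto
  qed
  also have "c \<le> \<dots>" using le by (auto intro!: INF_greatest)
  finally show ?thesis by simp
qed

theorem theorem3p8:
  fixes G :: "('go, 'ga) moncat" and X :: "('xo, 'xa) cat"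
    and Tfo :: "'go \<Rightarrow> 'xo \<Rightarrow> 'xo" and Tfa :: "'go \<Rightarrow> 'xa \<Rightarrow> 'xa"
    and Tnat :: "'ga \<Rightarrow> 'xo \<Rightarrow> 'xa" and W :: "'go \<Rightarrow> ereal"
  assumes "is_strict_monoidal_category G"
    and "is_category X"
    and "is_strict_monoidal_functor G X Tfo Tfa Tnat"
    and "is_monoidal_weight G W"
  shows "(\<forall>x \<in> cat_obj X. interleaving_distance G X Tfo Tfa Tnat W x x = 0) \<and>
         (\<forall>x \<in> cat_obj X. \<forall>y \<in> cat_obj X.
            interleaving_distance G X Tfo Tfa Tnat W x y = interleaving_distance G X Tfo Tfa Tnat W y x) \<and>
         (\<forall>x \<in> cat_obj X. \<forall>y \<in> cat_obj X. \<forall>z \<in> cat_obj X.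
            interleaving_distance G X Tfo Tfa Tnat W x z
              \<le> interleaving_distance G X Tfo Tfa Tnat W x y + interleaving_distance G X Tfo Tfa Tnat W y z)"
proof -
  interpret setting G X Tfo Tfa Tnat using assms(1-3) by unfold_locales
  have W0: "\<And>g. g \<in> cat_obj G \<Longrightarrow> 0 \<le> W g" and We: "W e = 0"
    and Wt: "\<And>f g. f \<in> cat_obj G \<Longrightarrow> g \<in> cat_obj G \<Longrightarrow> W (to g f) \<le> W g + W f"
    using assms(4) unfolding is_monoidal_weight_def by auto
  let ?S = "\<lambda>x y. {max (W g) (W h) | g h. g \<in> cat_obj G \<and> h \<in> cat_obj G \<and>
                                 interleaved G X Tfo Tfa Tnat x y g h}"
  have d: "\<And>x y. interleaving_distance G X Tfo Tfa Tnat W x y = Inf (?S x y)"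
    unfolding interleaving_distance_def by simp
  have S0: "\<And>x y a. a \<in> ?S x y \<Longrightarrow> 0 \<le> a"
    using W0 by (auto simp: le_max_iff_disj)
  have P1: "\<forall>x \<in> cat_obj X. interleaving_distance G X Tfo Tfa Tnat W x x = 0"
  proof
    fix x assume x: "x \<in> cat_obj X"
    have "0 \<in> ?S x x" using il_refl[OF x] G_e We by force
    then have "Inf (?S x x) \<le> 0" by (rule Inf_lower)
    moreover have "0 \<le> Inf (?S x x)" by (rule Inf_greatest) (rule S0)
    ultimately show "interleaving_distance G X Tfo Tfa Tnat W x x = 0" using d by simp
  qed
  have Ssym: "\<And>x y. ?S x y = ?S y x"
    using il_sym by (auto simp: max.commute) (metis max.commute)+
  have P2: "\<forall>x \<in> cat_obj X. \<forall>y \<in> cat_obj X.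
            interleaving_distance G X Tfo Tfa Tnat W x y = interleaving_distance G X Tfo Tfa Tnat W y x"
    using d Ssym by simp
  have P3: "\<forall>x \<in> cat_obj X. \<forall>y \<in> cat_obj X. \<forall>z \<in> cat_obj X.
            interleaving_distance G X Tfo Tfa Tnat W x z
              \<le> interleaving_distance G X Tfo Tfa Tnat W x y + interleaving_distance G X Tfo Tfa Tnat W y z"
  proof (intro ballI)
    fix x y z assume x: "x \<in> cat_obj X" and y: "y \<in> cat_obj X" and z: "z \<in> cat_obj X"
    have "Inf (?S x z) \<le> Inf (?S x y) + Inf (?S y z)"
    proof (rule ereal_Inf_tri)
      show "\<And>a. a \<in> ?S x y \<Longrightarrow> 0 \<le> a" "\<And>b. b \<in> ?S y z \<Longrightarrow> 0 \<le> b" using S0 by blast+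
      fix a b assume "a \<in> ?S x y" "b \<in> ?S y z"
      then obtain g h g' h' where g: "g \<in> cat_obj G" and h: "h \<in> cat_obj G"
        and g': "g' \<in> cat_obj G" and h': "h' \<in> cat_obj G"
        and i1: "interleaved G X Tfo Tfa Tnat x y g h" and i2: "interleaved G X Tfo Tfa Tnat y z g' h'"
        and a: "a = max (W g) (W h)" and b: "b = max (W g') (W h')" by blast
      have mem: "max (W (to g g')) (W (to h' h)) \<in> ?S x z"
        using il_trans[OF x y z g h g' h' i1 i2] G_to g h g' h' by blast
      have "W (to g g') \<le> W g + W g'" using Wt g g' by blast
      also have "\<dots> \<le> a + b" unfolding a b by (intro add_mono) auto
      finally have 1: "W (to g g') \<le> a + b" .
      have "W (to h' h) \<le> W h' + W h" using Wt h h' by blast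
      also have "\<dots> = W h + W h'" by (simp add: add.commute)
      also have "\<dots> \<le> a + b" unfolding a b by (intro add_mono) auto
      finally have 2: "W (to h' h) \<le> a + b" .
      have "Inf (?S x z) \<le> max (W (to g g')) (W (to h' h))" using mem by (rule Inf_lower)
      also have "\<dots> \<le> a + b" using 1 2 by simp
      finally show "Inf (?S x z) \<le> a + b" .
    qed
    then show "interleaving_distance G X Tfo Tfa Tnat W x z
              \<le> interleaving_distance G X Tfo Tfa Tnat W x y + interleaving_distance G X Tfo Tfa Tnat W y z"
      using d by simp
  qed
  show ?thesis using P1 P2 P3 by blast
qed

end
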